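(* Let $\mathcal{A}\subset\mathbb{R}^d$ be a finite multiset with $|\mathcal{A}|=(d+1)n+1$, $n\in\mathbb{Z}_{\ge 0}$, and let $l:\mathbb{R}^d\to\mathbb{R}$ be a linear function. Then: (1) if at least $dn+1$ points $\bar{x}$ of $\mathcal{A}$ satisfy $l(\bar{x})\le m$ for some $m\in\mathbb{R}$, then $l(y)\le m$ for every $y\in\varPsi(\mathcal{A},n)$; (2) if at least $dn+1$ points $\bar{x}$ of $\mathcal{A}$ satisfy $l(\bar{x})\ge M$ for some $M\in\mathbb{R}$, then $l(z)\ge M$ for every $z\in\varPsi(\mathcal{A},n)$.
   Context: Cardinality of a multiset counts points with multiplicity. For a finite multiset $\mathcal{A}\subset\mathbb{R}^d$ of cardinality $m'$ and integer $0\le n\le m'$, $\mathcal{S}(\mathcal{A},n)$ is the collection of all sub-multisets of $\mathcal{A}$ of cardinality $m'-n$, and $\varPsi(\mathcal{A},n)=\bigcap_{S\in\mathcal{S}(\mathcal{A},n)}\mathrm{Conv}(S)$, where $\mathrm{Conv}$ denotes convex hull. *)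

theory Defs
  imports "HOL-Analysis.Analysis" "HOL-Library.Multiset"
begin

definition subms :: "'a multiset \<Rightarrow> nat \<Rightarrow> 'a multiset set" where
  "subms A n = {S. S \<subseteq># A \<and> size S = size A - n}"

definition Psi :: "'a::real_vector multiset \<Rightarrow> nat \<Rightarrow> 'a set" where
  "Psi A n = (\<Inter>S\<in>subms A n. convex hull (set_mset S))"

end

theory Submission
  imports Defs
begin

lemma sub_of_size:
  fixes B :: "'b multiset"
  shows "k \<le> size B \<Longrightarrow> \<exists>S. S \<subseteq># B \<and> size S = k"
proof (induction B arbitrary: k)
  case empty
  then show ?case by auto
next
  case (add x B)
  show ?case
  proof (cases "k \<le> size B")
    case True
    then obtain S where "S \<subseteq># B" "size S = k" using add.IH by blast
    then show ?thesis by (metis add_mset_add_single mset_subset_eq_add_left subset_mset.order_trans)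
  next
    case False
    then have "k = size (add_mset x B)" using add.prems by simp
    then show ?thesis by blast
  qed
qed

lemma convex_lin_le:
  assumes "linear l" shows "convex {x. (l x::real) \<le> m}"
proof -
  have "{x. l x \<le> m} = l -` {..m}" by auto
  then show ?thesis using convex_linear_vimage[OF assms, of "{..m}"] by auto
qed

lemma convex_lin_ge:
  assumes "linear l" shows "convex {x. (l x::real) \<ge> m}"
proof -
  have "{x. l x \<ge> m} = l -` {m..}" by auto
  then show ?thesis using convex_linear_vimage[OF assms, of "{m..}"] by auto
qed

lemma key:
  fixes A :: "'a::real_vector multiset" and P :: "'a \<Rightarrow> bool"
  assumes "size (filter_mset P A) \<ge> size A - n" and "convex {x. P x}"
    and "y \<in> Psi A n"
  shows "P y"
proof -
  obtain S where S: "S \<subseteq># filter_mset P A" "size S = size A - n"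
    using sub_of_size[OF assms(1)] by blast
  have "S \<subseteq># A" using S(1) multiset_filter_subset[of P A] by (rule subset_mset.order_trans)
  then have "S \<in> subms A n" using S(2) unfolding subms_def by auto
  then have "y \<in> convex hull (set_mset S)" using assms(3) unfolding Psi_def by auto
  moreover have "set_mset S \<subseteq> {x. P x}"
  proof
    fix x assume "x \<in># S"
    then have "x \<in># filter_mset P A" by (rule mset_subset_eqD[OF S(1)])
    then show "x \<in> {x. P x}" by simp
  qed
  then have "convex hull (set_mset S) \<subseteq> {x. P x}" using assms(2) by (rule hull_minimal)
  ultimately show ?thesis by blast
qed

theorem lemma4:
  fixes A :: "'a::euclidean_space multiset" and n :: nat and l :: "'a \<Rightarrow> real"
  assumes "size A = (DIM('a) + 1) * n + 1"
    and "linear l"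
  shows "(\<forall>m::real. size (filter_mset (\<lambda>x. l x \<le> m) A) \<ge> DIM('a) * n + 1
            \<longrightarrow> (\<forall>y\<in>Psi A n. l y \<le> m))
         \<and> (\<forall>M::real. size (filter_mset (\<lambda>x. l x \<ge> M) A) \<ge> DIM('a) * n + 1
            \<longrightarrow> (\<forall>z\<in>Psi A n. l z \<ge> M))"
proof -
  have e: "size A - n = DIM('a) * n + 1" using assms(1) by (simp add: algebra_simps)
  show ?thesis
  proof (intro conjI allI impI ballI)
    fix m y assume h: "size (filter_mset (\<lambda>x. l x \<le> m) A) \<ge> DIM('a) * n + 1" "y \<in> Psi A n"
    show "l y \<le> m"
      using key[where P="\<lambda>x. l x \<le> m" and A=A and n=n and y=y] h e convex_lin_le[OF assms(2)] by auto
  next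
    fix m y assume h: "size (filter_mset (\<lambda>x. l x \<ge> m) A) \<ge> DIM('a) * n + 1" "y \<in> Psi A n"
    show "l y \<ge> m"
      using key[where P="\<lambda>x. l x \<ge> m" and A=A and n=n and y=y] h e convex_lin_ge[OF assms(2)] by auto
  qed
qed

end
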